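(* Let $n\ge4$ and let $H$ be an arbitrary element of the Hilbert space $\mathscr H_n$. Then there exist points $v_1,\dots,v_n$ in a Euclidean space $\mathbb R^d$ with $d\le n-2$ such that the $\mathcal U$-centered Euclidean distance matrix of $v_1,\dots,v_n$, i.e. $\widetilde D$ for $D=(|v_i-v_j|)_{i,j}$, is exactly equal to $H$.
   Context: $\mathcal U$-centering: for a symmetric real $n\times n$ matrix $A=(a_{ij})$ with zero diagonal, $n>2$, the matrix $\widetilde A$ has entries $\widetilde A_{ii}=0$ and, for $i\neq j$, $$\widetilde A_{ij}=a_{ij}-\frac{1}{n-2}\sum_{\ell=1}^n a_{i\ell}-\frac{1}{n-2}\sum_{k=1}^n a_{kj}+\frac{1}{(n-1)(n-2)}\sum_{k,\ell=1}^n a_{k\ell}.$$ $\mathscr H_n$ is the real linear span of all matrices $\widetilde A$ where $A$ ranges over the Euclidean distance matrices $(|x_i-x_j|)_{i,j}$ of $n$-point sets in some $\mathbb R^p$, $p\ge1$ (equivalently, the set of $\widetilde A$ for $A$ in the linear span of such distance matrices), with inner product $(C\cdot D)=\frac{1}{n(n-3)}\sum_{i\ne j}C_{ij}D_{ij}$. *)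

theory Defs
  imports Complex_Main
begin

text \<open>Points of R^p are represented as functions nat => real, only the coordinates
  0..p-1 being relevant; matrices as functions nat => nat => real with indices 0..n-1.\<close>

definition edist :: "nat \<Rightarrow> (nat \<Rightarrow> real) \<Rightarrow> (nat \<Rightarrow> real) \<Rightarrow> real" where
  "edist p x y = sqrt (\<Sum>k<p. (x k - y k)^2)"

definition dist_matrix :: "nat \<Rightarrow> (nat \<Rightarrow> nat \<Rightarrow> real) \<Rightarrow> nat \<Rightarrow> nat \<Rightarrow> real" where
  "dist_matrix p v = (\<lambda>i j. edist p (v i) (v j))"

definition ucenter :: "nat \<Rightarrow> (nat \<Rightarrow> nat \<Rightarrow> real) \<Rightarrow> nat \<Rightarrow> nat \<Rightarrow> real" where
  "ucenter n A = (\<lambda>i j. if i < n \<and> j < n \<and> i \<noteq> j then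
      A i j - (\<Sum>l<n. A i l) / (real n - 2) - (\<Sum>k<n. A k j) / (real n - 2)
      + (\<Sum>k<n. \<Sum>l<n. A k l) / ((real n - 1) * (real n - 2))
    else 0)"

text \<open>The space H_n: the real linear span (finite linear combinations) of the U-centered
  Euclidean distance matrices of n-point sets in R^p, p >= 1.\<close>
definition Hspace :: "nat \<Rightarrow> (nat \<Rightarrow> nat \<Rightarrow> real) set" where
  "Hspace n = {H. \<exists>(m::nat) (c::nat \<Rightarrow> real) (p::nat \<Rightarrow> nat) (V::nat \<Rightarrow> nat \<Rightarrow> nat \<Rightarrow> real).
      (\<forall>t<m. 1 \<le> p t) \<and>
      H = (\<lambda>i j. \<Sum>t<m. c t * ucenter n (dist_matrix (p t) (V t)) i j)}"

end

theory Submission imports Defs begin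

function chol :: "(nat \<Rightarrow> nat \<Rightarrow> real) \<Rightarrow> nat \<Rightarrow> nat \<Rightarrow> real" where
  "chol g i l = (if i < l then 0
     else if l = i then sqrt (g i i - (\<Sum>r<i. (chol g i r)^2))
     else (g i l - (\<Sum>r<l. chol g i r * chol g l r)) / chol g l l)"
  by auto
termination
  by (relation "inv_image (less_than <*lex*> less_than) (\<lambda>(g,i,l). (i,l))") auto

declare chol.simps[simp del]

definition rad :: "(nat \<Rightarrow> nat \<Rightarrow> real) \<Rightarrow> nat \<Rightarrow> real" where
  "rad g i = g i i - (\<Sum>r<i. (chol g i r)^2)"

lemma chol_above: "i < l \<Longrightarrow> chol g i l = 0"
  by (subst chol.simps) simp

lemma chol_diag: "chol g i i = sqrt (rad g i)"
  by (subst chol.simps) (simp add: rad_def)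

lemma chol_below: "l < i \<Longrightarrow> chol g i l = (g i l - (\<Sum>r<l. chol g i r * chol g l r)) / chol g l l"
  by (subst chol.simps) simp

lemma chol_local:
  assumes "\<And>a b. a \<le> k \<Longrightarrow> b \<le> k \<Longrightarrow> g a b = g' a b"
  shows "i \<le> k \<Longrightarrow> chol g i l = chol g' i l"
proof (induction i arbitrary: l rule: less_induct)
  case (less i)
  note IHo = less.IH
  show ?case
  proof (induction l rule: less_induct)
    case (less l)
    show ?case
    proof (cases "i < l")
      case True then show ?thesis by (simp add: chol_above)
    next
      case False
      show ?thesis
      proof (cases "l = i")
        case True
        have "(\<Sum>r<i. (chol g i r)^2) = (\<Sum>r<i. (chol g' i r)^2)"
          using less.IH True by auto
        then show ?thesis using True assms \<open>i \<le> k\<close> by (simp add: chol_diag rad_def)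
      next
        case F: False
        with False have li: "l < i" by simp
        have s: "(\<Sum>r<l. chol g i r * chol g l r) = (\<Sum>r<l. chol g' i r * chol g' l r)"
        proof (rule sum.cong)
          fix r assume r: "r \<in> {..<l}"
          have "chol g l r = chol g' l r" using IHo[of l r] li \<open>i \<le> k\<close> by simp
          moreover have "chol g i r = chol g' i r" using less.IH r by simp
          ultimately show "chol g i r * chol g l r = chol g' i r * chol g' l r" by simp
        qed simp
        have "chol g l l = chol g' l l" using IHo[of l l] li \<open>i \<le> k\<close> by simp
        then show ?thesis using s li assms \<open>i \<le> k\<close> by (simp add: chol_below[OF li])
      qed
    qed
  qed
qed


lemma chol_gram_lower:
  assumes pos: "\<And>l. l < k \<Longrightarrow> rad g l > 0" and nn: "rad g k \<ge> 0"
  and ji: "j \<le> i" and ik: "i \<le> k"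
  shows "(\<Sum>r<Suc j. chol g i r * chol g j r) = g i j"
proof (cases "j = i")
  case True
  have "(\<Sum>r<Suc j. chol g i r * chol g j r) = (\<Sum>r<i. (chol g i r)^2) + (sqrt (rad g i))^2"
    using True by (simp add: power2_eq_square chol_diag)
  also have "(sqrt (rad g i))^2 = rad g i"
    using pos[of i] nn ik True by (cases "i = k") auto
  finally show ?thesis using True by (simp add: rad_def)
next
  case False
  with ji have "j < i" by simp
  hence "chol g j j > 0" using pos[of j] ik by (simp add: chol_diag)
  then show ?thesis using \<open>j < i\<close> by (simp add: chol_below[OF \<open>j < i\<close>])
qed

lemma chol_gram:
  assumes sym: "\<And>a b. g a b = g b a"
  and pos: "\<And>l. l < k \<Longrightarrow> rad g l > 0" and nn: "rad g k \<ge> 0"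
  and ik: "i \<le> k" and jk: "j \<le> k"
  shows "(\<Sum>r<Suc k. chol g i r * chol g j r) = g i j"
proof -
  have ext: "(\<Sum>r<Suc k. chol g a r * chol g b r) = (\<Sum>r<Suc b. chol g a r * chol g b r)"
    if "b \<le> k" for a b
    by (rule sum.mono_neutral_right) (use that in \<open>auto simp: chol_above\<close>)
  show ?thesis
  proof (cases "j \<le> i")
    case True
    then show ?thesis using ext[of j i] jk chol_gram_lower[OF pos nn True ik] by simp
  next
    case False
    hence "i \<le> j" by simp
    have "(\<Sum>r<Suc k. chol g i r * chol g j r) = (\<Sum>r<Suc k. chol g j r * chol g i r)"
      by (simp add: mult.commute)
    also have "\<dots> = g j i" using ext[of i j] ik chol_gram_lower[OF pos nn \<open>i \<le> j\<close> jk] by simp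
    finally show ?thesis using sym by simp
  qed
qed


lemma chol_bounds:
  assumes gd: "\<And>i. i < m \<Longrightarrow> g i i \<ge> \<gamma>"
  and off: "\<And>i j. i < m \<Longrightarrow> j < m \<Longrightarrow> i \<noteq> j \<Longrightarrow> \<bar>g i j\<bar> \<le> \<epsilon>"
  and q: "q > 0" and d0: "\<delta> \<ge> 0" and md: "real m * \<delta>^2 \<le> \<gamma> - q^2"
  and key: "\<epsilon> + real m * \<delta>^2 \<le> \<delta> * q"
  shows "k < m \<Longrightarrow> rad g k \<ge> q^2 \<and> (\<forall>l<k. \<bar>chol g k l\<bar> \<le> \<delta>)"
proof (induction k rule: less_induct)
  case (less k)
  note IHo = less.IH
  have piv: "chol g l l \<ge> q" if "l < k" for l
  proof -
    have "rad g l \<ge> q^2" using IHo[of l] that less.prems by simp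
    hence "sqrt (q^2) \<le> sqrt (rad g l)" by (rule real_sqrt_le_mono)
    thus ?thesis using q by (simp add: chol_diag)
  qed
  have low: "\<bar>chol g k l\<bar> \<le> \<delta>" if "l < k" for l
    using that
  proof (induction l rule: less_induct)
    case (less l)
    have b1: "\<bar>chol g k r * chol g l r\<bar> \<le> \<delta> * \<delta>" if "r < l" for r
    proof -
      have "\<bar>chol g k r\<bar> \<le> \<delta>" using less.IH that less.prems by simp
      moreover have "\<bar>chol g l r\<bar> \<le> \<delta>" using IHo[of l] that less.prems \<open>k < m\<close> by simp
      hence "\<bar>chol g k r\<bar> * \<bar>chol g l r\<bar> \<le> \<delta> * \<delta>"
        using \<open>\<bar>chol g k r\<bar> \<le> \<delta>\<close> d0 by (intro mult_mono) auto
      thus ?thesis by (simp only: abs_mult)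
    qed
    have "\<bar>\<Sum>r<l. chol g k r * chol g l r\<bar> \<le> (\<Sum>r<l. \<bar>chol g k r * chol g l r\<bar>)"
      by (rule sum_abs)
    also have "\<dots> \<le> (\<Sum>r<l. \<delta> * \<delta>)" using b1 by (intro sum_mono) auto
    also have "\<dots> = real l * \<delta>^2" by (simp add: power2_eq_square)
    also have "\<dots> \<le> real m * \<delta>^2" using less.prems \<open>k < m\<close> by (intro mult_right_mono) auto
    finally have sb: "\<bar>\<Sum>r<l. chol g k r * chol g l r\<bar> \<le> real m * \<delta>^2" .
    have gb: "\<bar>g k l\<bar> \<le> \<epsilon>" using off[of k l] less.prems \<open>k < m\<close> by simp
    have num: "\<bar>g k l - (\<Sum>r<l. chol g k r * chol g l r)\<bar> \<le> \<delta> * q"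
      using sb gb key by linarith
    have p: "chol g l l \<ge> q" using piv less.prems by simp
    have "\<bar>chol g k l\<bar> = \<bar>g k l - (\<Sum>r<l. chol g k r * chol g l r)\<bar> / chol g l l"
    proof -
      have "\<bar>chol g l l\<bar> = chol g l l" using p q by simp
      thus ?thesis by (simp add: chol_below[OF less.prems] abs_divide)
    qed
    also have "\<dots> \<le> (\<delta> * q) / q"
      by (rule frac_le) (use num p q d0 in auto)
    also have "\<dots> = \<delta>" using q by simp
    finally show ?case .
  qed
  have "(\<Sum>r<k. (chol g k r)^2) \<le> (\<Sum>r<k. \<delta>^2)"
  proof (intro sum_mono)
    fix r assume "r \<in> {..<k}"
    hence "\<bar>chol g k r\<bar> \<le> \<delta>" using low by simp
    hence "\<bar>chol g k r\<bar>^2 \<le> \<delta>^2" by (intro power_mono) auto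
    thus "(chol g k r)^2 \<le> \<delta>^2" by simp
  qed
  also have "\<dots> = real k * \<delta>^2" by simp
  also have "\<dots> \<le> real m * \<delta>^2" using less.prems by (intro mult_right_mono) auto
  finally have "rad g k \<ge> q^2" using gd[of k] less.prems md by (simp add: rad_def)
  with low show ?case by simp
qed


lemma chol_cont:
  assumes fx: "\<And>t a b. a < k \<Longrightarrow> b < k \<Longrightarrow> G t a b = G 0 a b"
  and cont: "\<And>l. l \<le> k \<Longrightarrow> isCont (\<lambda>t. G t k l) x"
  and pv: "\<And>l. l < k \<Longrightarrow> chol (G 0) l l \<noteq> 0"
  shows "isCont (\<lambda>t. rad (G t) k) x"
proof -
  have const: "chol (G t) l r = chol (G 0) l r" if "l < k" for t l r
  proof (rule chol_local[of "k - 1"])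
    fix a b assume "a \<le> k - 1" "b \<le> k - 1"
    thus "G t a b = G 0 a b" using that by (intro fx) auto
  next
    show "l \<le> k - 1" using that by simp
  qed
  have c: "isCont (\<lambda>t. chol (G t) k l) x" if "l < k" for l
    using that
  proof (induction l rule: less_induct)
    case (less l)
    have e: "(\<lambda>t. chol (G t) k l) = (\<lambda>t. (G t k l - (\<Sum>r<l. chol (G t) k r * chol (G 0) l r)) / chol (G 0) l l)"
    proof (rule ext)
      fix t
      have "chol (G t) l l = chol (G 0) l l" using const less.prems by blast
      moreover have "(\<Sum>r<l. chol (G t) k r * chol (G t) l r) = (\<Sum>r<l. chol (G t) k r * chol (G 0) l r)"
        using const[where t=t and l=l] less.prems by simp
      ultimately show "chol (G t) k l = (G t k l - (\<Sum>r<l. chol (G t) k r * chol (G 0) l r)) / chol (G 0) l l"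
        by (simp add: chol_below[OF less.prems])
    qed
    show ?case unfolding e
      using less.IH less.prems cont[of l] pv[of l]
      by (intro continuous_intros) auto
  qed
  have e: "(\<lambda>t. rad (G t) k) = (\<lambda>t. G t k k - (\<Sum>r<k. (chol (G t) k r)^2))"
    by (simp add: rad_def)
  show ?thesis unfolding e using c cont[of k] by (intro continuous_intros) auto
qed

lemma ucenter_cong:
  assumes "\<And>i j. i < n \<Longrightarrow> j < n \<Longrightarrow> A i j = B i j"
  shows "ucenter n A = ucenter n B"
proof -
  have r: "(\<Sum>l<n. A i l) = (\<Sum>l<n. B i l)" if "i < n" for i using assms that by simp
  have c: "(\<Sum>k<n. A k j) = (\<Sum>k<n. B k j)" if "j < n" for j using assms that by simp
  have t: "(\<Sum>k<n. \<Sum>l<n. A k l) = (\<Sum>k<n. \<Sum>l<n. B k l)" using assms by simp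
  show ?thesis unfolding ucenter_def using assms r c t by (intro ext) auto
qed

lemma ucenter_lin:
  "ucenter n (\<lambda>i j. \<Sum>t<m. c t * B t i j) = (\<lambda>i j. \<Sum>t<m. c t * ucenter n (B t) i j)"
proof (intro ext)
  fix i j
  show "ucenter n (\<lambda>i j. \<Sum>t<m. c t * B t i j) i j = (\<Sum>t<m. c t * ucenter n (B t) i j)"
  proof (cases "i < n \<and> j < n \<and> i \<noteq> j")
    case True
    have "(\<Sum>t<m. c t * ucenter n (B t) i j) = (\<Sum>t<m. c t * B t i j
      - (\<Sum>l<n. c t * B t i l) / (real n - 2) - (\<Sum>k<n. c t * B t k j) / (real n - 2)
      + (\<Sum>k<n. \<Sum>l<n. c t * B t k l) / ((real n - 1) * (real n - 2)))"
      using True by (intro sum.cong) (simp_all add: ucenter_def sum_distrib_left algebra_simps)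
    also have "\<dots> = ucenter n (\<lambda>i j. \<Sum>t<m. c t * B t i j) i j"
      using True unfolding ucenter_def
      by (simp add: sum.distrib sum_subtractf sum_divide_distrib[symmetric] sum.swap[of _ "{..<m}"])
    finally show ?thesis by simp
  next
    case False
    have z: "\<And>F. ucenter n F i j = 0" using False unfolding ucenter_def by auto
    show ?thesis by (simp add: z)
  qed
qed


lemma alg_kernel:
  fixes N a R C T k xi xj X :: real
  assumes P: "N - 2 \<noteq> 0" and Q: "N - 1 \<noteq> 0"
  shows "(a + k + xi + xj) - (R + N * k + N * xi + X - (k + xi + xi)) / (N - 2)
    - (C + N * k + N * xj + X - (k + xj + xj)) / (N - 2)
    + (T + N * N * k + N * X + N * X - N * k - 2 * X) / ((N - 1) * (N - 2))
    = a - R / (N - 2) - C / (N - 2) + T / ((N - 1) * (N - 2))"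
proof -
  have "T + N * N * k + N * X + N * X - N * k - 2 * X = T + (N - 1) * (N * k + 2 * X)"
    by (simp add: algebra_simps)
  hence "(T + N * N * k + N * X + N * X - N * k - 2 * X) / ((N - 1) * (N - 2)) = (T + (N - 1) * (N * k + 2 * X)) / ((N - 1) * (N - 2))"
    by simp
  also have "\<dots> = T / ((N - 1) * (N - 2)) + ((N - 1) * (N * k + 2 * X)) / ((N - 1) * (N - 2))"
    by (rule add_divide_distrib)
  also have "((N - 1) * (N * k + 2 * X)) / ((N - 1) * (N - 2)) = (N * k + 2 * X) / (N - 2)"
    using Q by (rule mult_divide_mult_cancel_left)
  finally have e: "(T + N * N * k + N * X + N * X - N * k - 2 * X) / ((N - 1) * (N - 2)) = T / ((N - 1) * (N - 2)) + (N * k + 2 * X) / (N - 2)" .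
  have f: "(R + N * k + N * xi + X - (k + xi + xi)) / (N - 2) = R / (N - 2) + (N * k + N * xi + X - (k + xi + xi)) / (N - 2)"
    "(C + N * k + N * xj + X - (k + xj + xj)) / (N - 2) = C / (N - 2) + (N * k + N * xj + X - (k + xj + xj)) / (N - 2)"
    by (simp_all add: add_divide_distrib[symmetric] algebra_simps)
  have g: "k + xi + xj - (N * k + N * xi + X - (k + xi + xi)) / (N - 2) - (N * k + N * xj + X - (k + xj + xj)) / (N - 2)
      + (N * k + 2 * X) / (N - 2) = 0"
  proof -
    have num: "(N * k + N * xi + X - (k + xi + xi)) + (N * k + N * xj + X - (k + xj + xj)) - (N * k + 2 * X) = (N - 2) * (k + xi + xj)"
      by (simp add: algebra_simps)
    have "(N * k + N * xi + X - (k + xi + xi)) / (N - 2) + (N * k + N * xj + X - (k + xj + xj)) / (N - 2) - (N * k + 2 * X) / (N - 2)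
       = ((N * k + N * xi + X - (k + xi + xi)) + (N * k + N * xj + X - (k + xj + xj)) - (N * k + 2 * X)) / (N - 2)"
      by (simp only: add_divide_distrib diff_divide_distrib)
    also have "\<dots> = k + xi + xj" unfolding num using P by simp
    finally show ?thesis by linarith
  qed
  show ?thesis unfolding e f using g by (simp add: algebra_simps)
qed

lemma ucenter_kernel:
  assumes n: "n \<ge> 3" and diag: "\<And>i. i < n \<Longrightarrow> A i i = 0"
  shows "ucenter n (\<lambda>i j. if i = j then 0 else A i j + \<kappa> + x i + x j) = ucenter n A"
proof -
  define B where "B = (\<lambda>i j. if i = j then 0 else A i j + \<kappa> + x i + x j)"
  define X where "X = (\<Sum>l<n. x l)"
  have Bex: "B i l = A i l + \<kappa> + x i + x l - (if l = i then \<kappa> + x i + x i else 0)" if "i < n" for i l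
    using diag[OF that] by (auto simp: B_def)
  have Bex2: "B k j = A k j + \<kappa> + x k + x j - (if k = j then \<kappa> + x j + x j else 0)" if "j < n" for j k
    using diag[OF that] by (auto simp: B_def)
  have row: "(\<Sum>l<n. B i l) = (\<Sum>l<n. A i l) + real n * \<kappa> + real n * x i + X - (\<kappa> + x i + x i)"
    if "i < n" for i
    using that by (simp add: Bex sum_subtractf sum.distrib X_def)
  have col: "(\<Sum>k<n. B k j) = (\<Sum>k<n. A k j) + real n * \<kappa> + real n * x j + X - (\<kappa> + x j + x j)"
    if "j < n" for j
    using that by (simp add: Bex2 sum_subtractf sum.distrib X_def)
  have tot: "(\<Sum>k<n. \<Sum>l<n. B k l) = (\<Sum>k<n. \<Sum>l<n. A k l) + real n * real n * \<kappa> + real n * X + real n * X - real n * \<kappa> - 2 * X"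
  proof -
    have h2: "(\<Sum>k<n. x k * 2) = 2 * (\<Sum>k<n. x k)" by (simp add: sum_distrib_left mult.commute)
    have "(\<Sum>k<n. \<Sum>l<n. B k l) = (\<Sum>k<n. (\<Sum>l<n. A k l) + real n * \<kappa> + real n * x k + X - (\<kappa> + x k + x k))"
      by (intro sum.cong) (simp_all add: row)
    also have "\<dots> = (\<Sum>k<n. \<Sum>l<n. A k l) + real n * real n * \<kappa> + real n * X + real n * X - real n * \<kappa> - 2 * X"
      using h2 by (simp add: sum_subtractf sum.distrib X_def sum_distrib_left[symmetric] algebra_simps)
    finally show ?thesis .
  qed
  have n2: "real n - 2 \<noteq> 0" "real n - 1 \<noteq> 0" using n by auto
  show ?thesis
  proof (intro ext)
    fix i j
    show "ucenter n (\<lambda>i j. if i = j then 0 else A i j + \<kappa> + x i + x j) i j = ucenter n A i j"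
    proof (cases "i < n \<and> j < n \<and> i \<noteq> j")
      case True
      have ij: "i < n" "j < n" using True by auto
      have Bij: "B i j = A i j + \<kappa> + x i + x j" using True by (simp add: B_def)
      have "ucenter n B i j = B i j - (\<Sum>l<n. B i l) / (real n - 2) - (\<Sum>k<n. B k j) / (real n - 2)
          + (\<Sum>k<n. \<Sum>l<n. B k l) / ((real n - 1) * (real n - 2))"
        using True by (simp add: ucenter_def)
      also have "\<dots> = ucenter n A i j"
        unfolding Bij row[OF ij(1)] col[OF ij(2)] tot ucenter_def if_P[OF True]
        by (rule alg_kernel[OF n2])
      finally show ?thesis unfolding B_def .
    next
      case False
      have z: "\<And>F. ucenter n F i j = 0" using False unfolding ucenter_def by auto
      show ?thesis by (simp add: z)
    qed
  qed
qed


lemma abs_le_sum2: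
  fixes f :: "nat \<Rightarrow> nat \<Rightarrow> real"
  assumes "i < n" "j < n"
  shows "\<bar>f i j\<bar> \<le> (\<Sum>a<n. \<Sum>b<n. \<bar>f a b\<bar>)"
proof -
  have "\<bar>f i j\<bar> \<le> (\<Sum>b<n. \<bar>f i b\<bar>)"
    using assms by (intro member_le_sum) auto
  also have "\<dots> \<le> (\<Sum>a<n. \<Sum>b<n. \<bar>f a b\<bar>)"
    using assms by (intro member_le_sum[where f = "\<lambda>a. \<Sum>b<n. \<bar>f a b\<bar>"]) (auto intro: sum_nonneg)
  finally show ?thesis .
qed

lemma sqrt2_bounds: "1.4 \<le> sqrt (2::real)" "sqrt (2::real) \<le> 1.5"
proof -
  show "1.4 \<le> sqrt (2::real)" by (rule real_le_rsqrt) (simp add: power2_eq_square)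
  have "sqrt (2::real) \<le> sqrt (1.5^2)" by (rule real_sqrt_le_mono) (simp add: power2_eq_square)
  thus "sqrt (2::real) \<le> 1.5" by simp
qed

lemma Gexp:
  fixes a b e s r :: real assumes r: "r * r = 2"
  shows "((a + s)^2 + (b + s)^2 - (e + r * s)^2) / 2 = s * (a + b - r * e) + (a^2 + b^2 - e^2) / 2"
proof -
  have "(e + r * s)^2 = e^2 + 2 * r * s * e + (r * r) * s^2" by (simp add: power2_eq_square algebra_simps)
  also have "\<dots> = e^2 + 2 * r * s * e + 2 * s^2" using r by simp
  finally have h: "(e + r * s)^2 = e^2 + 2 * r * s * e + 2 * s^2" .
  show ?thesis unfolding h by (simp add: power2_eq_square field_simps)
qed

theorem theorem2:
  fixes n :: nat and H :: "nat \<Rightarrow> nat \<Rightarrow> real"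
  assumes "4 \<le> n" and "H \<in> Hspace n"
  shows "\<exists>(d::nat) (v::nat \<Rightarrow> nat \<Rightarrow> real). 1 \<le> d \<and> d \<le> n - 2 \<and>
           ucenter n (dist_matrix d v) = H"
proof -
  obtain mm :: nat and c :: "nat \<Rightarrow> real" and p :: "nat \<Rightarrow> nat" and V :: "nat \<Rightarrow> nat \<Rightarrow> nat \<Rightarrow> real" where HV: "H = (\<lambda>i j. \<Sum>t<mm. c t * ucenter n (dist_matrix (p t) (V t)) i j)"
    using assms(2) unfolding Hspace_def mem_Collect_eq by blast
  define A where "A = (\<lambda>i j. \<Sum>t<mm. c t * dist_matrix (p t) (V t) i j)"
  have HA: "H = ucenter n A" unfolding HV A_def by (simp add: ucenter_lin)
  have Adiag: "A i i = 0" for i by (simp add: A_def dist_matrix_def edist_def)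
  have Asym: "A i j = A j i" for i j
  proof -
    have es: "edist pp y z = edist pp z y" for pp y z
      unfolding edist_def by (simp add: power2_commute)
    show ?thesis unfolding A_def dist_matrix_def by (intro sum.cong refl) (metis es)
  qed
  define M where "M = (\<Sum>a<n. \<Sum>b<n. \<bar>A a b\<bar>)"
  have AM: "\<bar>A i j\<bar> \<le> M" if "i < n" "j < n" for i j
    unfolding M_def using abs_le_sum2[OF that] .
  have AMl: "- M \<le> A i j" "A i j \<le> M" if "i < n" "j < n" for i j
    using AM[OF that] by (simp_all add: abs_le_iff)
  have M0: "M \<ge> 0" unfolding M_def by (intro sum_nonneg) auto
  define m where "m = n - 1"
  have mn: "n = Suc m" "m \<ge> 3" "m < n" "m - 1 \<noteq> m" "m - 1 < m" "m \<noteq> m - 1" using assms(1) by (auto simp: m_def)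
  define \<delta> where "\<delta> = 20 * M + 1"
  define s where "s = 8 * real m * \<delta>^2 + 8 * M + 1"
  define q where "q = s / 3"
  define \<gamma> where "\<gamma> = s^2 / 4"
  define \<epsilon> where "\<epsilon> = 6 * s * M"
  define \<kappa> where "\<kappa> = sqrt 2 * s"
  define x where "x = (\<lambda>(t::real) i. if i = m then s - sqrt 2 * s else if i = m - 1 then - t else 0)"
  define D where "D = (\<lambda>t i j. if i = j then 0 else A i j + \<kappa> + x t i + x t j)"
  define G where "G = (\<lambda>t i j. ((D t i m)^2 + (D t j m)^2 - (D t i j)^2) / 2)"
  have d1: "\<delta> \<ge> 1" using M0 by (simp add: \<delta>_def)
  have s1: "s \<ge> 1" "s \<ge> 8 * M" "8 * real m * \<delta>^2 \<le> s" using M0 d1 by (auto simp: s_def)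
  have sq2: "sqrt 2 * sqrt 2 = (2::real)" by simp
  note s2b = sqrt2_bounds
  have Dsym: "D t i j = D t j i" for t i j by (simp add: D_def Asym)
  have Gsym: "G t i j = G t j i" for t i j by (simp add: G_def Dsym)
  have Gfix: "G t a b = G 0 a b" if "a < m - 1" "b < m - 1" for t a b
    using that mn by (simp add: G_def D_def x_def)
  have Gcont: "isCont (\<lambda>t. G t (m - 1) l) y" if "l \<le> m - 1" for l y
  proof (cases "l = m - 1")
    case True
    then show ?thesis using mn by (simp add: G_def D_def x_def)
  next
    case False
    with that have "l < m - 1" by simp
    hence "l \<noteq> m" "l \<noteq> m - 1" "m - 1 \<noteq> l" "m \<noteq> l" by auto
    then show ?thesis using mn by (simp add: G_def D_def x_def)
  qed
  have Dm0: "D 0 i m = A i m + s" if "i < m" for i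
    using that by (simp add: D_def x_def \<kappa>_def)
  have Dij0: "D 0 i j = A i j + sqrt 2 * s" if "i < m" "j < m" "i \<noteq> j" for i j
    using that by (simp add: D_def x_def \<kappa>_def)
  have gd: "G 0 i i \<ge> \<gamma>" if "i < m" for i
  proof -
    have "- M \<le> A i m" using AMl that mn by simp
    hence "s / 2 \<le> A i m + s" using s1 by linarith
    hence "(s/2)^2 \<le> (A i m + s)^2" using s1 by (intro power_mono) auto
    moreover have "D 0 i i = 0" by (simp add: D_def)
    ultimately show ?thesis using that by (simp add: G_def Dm0 \<gamma>_def power_divide)
  qed
  have off: "\<bar>G 0 i j\<bar> \<le> \<epsilon>" if "i < m" "j < m" "i \<noteq> j" for i j
  proof -
    define a where "a = A i m"
    define b where "b = A j m"
    define e where "e = A i j"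
    have ab: "\<bar>a\<bar> \<le> M" "\<bar>b\<bar> \<le> M" "\<bar>e\<bar> \<le> M" using AM that mn by (auto simp: a_def b_def e_def)
    have G: "G 0 i j = s * (a + b - sqrt 2 * e) + (a^2 + b^2 - e^2) / 2"
      unfolding G_def Dm0[OF that(1)] Dm0[OF that(2)] Dij0[OF that] a_def[symmetric] b_def[symmetric] e_def[symmetric]
      by (rule Gexp[OF sq2])
    have "\<bar>sqrt 2 * e\<bar> \<le> 1.5 * M"
    proof -
      have "sqrt 2 * \<bar>e\<bar> \<le> 1.5 * M" by (rule mult_mono[OF s2b(2) ab(3)]) auto
      thus ?thesis by (simp add: abs_mult)
    qed
    hence "- (1.5 * M) \<le> sqrt 2 * e" "sqrt 2 * e \<le> 1.5 * M" by (simp_all add: abs_le_iff)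
    moreover have "- M \<le> a" "a \<le> M" "- M \<le> b" "b \<le> M" using ab by (simp_all add: abs_le_iff)
    ultimately have h1: "\<bar>a + b - sqrt 2 * e\<bar> \<le> 4 * M" unfolding abs_le_iff using M0 by (intro conjI; linarith)
    have h2: "\<bar>s * (a + b - sqrt 2 * e)\<bar> \<le> s * (4 * M)"
      using h1 s1 by (simp add: abs_mult mult_left_mono)
    have sq: "z * z \<le> M * M" if "\<bar>z\<bar> \<le> M" for z
    proof -
      have "\<bar>z\<bar>^2 \<le> M^2" by (rule power_mono) (use that in auto)
      thus ?thesis by (simp add: power2_eq_square)
    qed
    have h3: "\<bar>(a^2 + b^2 - e^2) / 2\<bar> \<le> 2 * (M * M)"
    proof -
      have u1: "a * a + b * b - e * e \<le> 2 * (M * M)"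
        using sq[OF ab(1)] sq[OF ab(2)] zero_le_square[of e] by linarith
      have u2: "- (a * a + b * b - e * e) \<le> 2 * (M * M)"
        using sq[OF ab(3)] zero_le_square[of a] zero_le_square[of b] zero_le_square[of e] sq[OF ab(1)] by linarith
      have "\<bar>a * a + b * b - e * e\<bar> \<le> 2 * (M * M)" unfolding abs_le_iff using u1 u2 by simp
      thus ?thesis by (simp add: power2_eq_square)
    qed
    have "M * M \<le> s * M" using s1 M0 by (intro mult_right_mono) auto
    moreover have "\<bar>G 0 i j\<bar> \<le> \<bar>s * (a + b - sqrt 2 * e)\<bar> + \<bar>(a^2 + b^2 - e^2) / 2\<bar>"
      unfolding G by (rule abs_triangle_ineq)
    moreover have "s * (4 * M) = 4 * (s * M)" "\<epsilon> = 6 * (s * M)" by (simp_all add: \<epsilon>_def)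
    ultimately show ?thesis using h2 h3 by linarith
  qed
  have s8: "real m * \<delta>^2 \<le> s / 8" using s1(3) by simp
  have md: "real m * \<delta>^2 \<le> \<gamma> - q^2"
  proof -
    have "s * 1 \<le> s * s" using s1 by (intro mult_left_mono) auto
    hence ss: "s \<le> s^2" by (simp add: power2_eq_square)
    have "q^2 = s^2 / 9" unfolding q_def by (simp add: power_divide)
    moreover have "\<gamma> = s^2 / 4" by (simp add: \<gamma>_def)
    ultimately show ?thesis using ss s8 zero_le_power2[of s] by linarith
  qed
  have key: "\<epsilon> + real m * \<delta>^2 \<le> \<delta> * q"
  proof -
    have e1: "\<delta> * q = 20/3 * (s * M) + s / 3" unfolding \<delta>_def q_def by (simp add: algebra_simps)
    have e2: "\<epsilon> = 6 * (s * M)" unfolding \<epsilon>_def by simp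
    have "s * M \<ge> 0" using s1 M0 by simp
    thus ?thesis using e1 e2 s8 s1(1) by linarith
  qed
  have q0: "q > 0" using s1 by (simp add: q_def)
  have bnd: "rad (G 0) k \<ge> q^2" if "k < m" for k
    using chol_bounds[where g="G 0" and m=m, OF gd off q0 _ md key that] d1 by simp
  have cholfix: "chol (G t) i r = chol (G 0) i r" if "i < m - 1" for t i r
  proof (rule chol_local[of "m - 2"])
    fix a b assume "a \<le> m - 2" "b \<le> m - 2"
    thus "G t a b = G 0 a b" using that mn by (intro Gfix) auto
  next
    show "i \<le> m - 2" using that by simp
  qed
  have radpos: "rad (G t) l > 0" if "l < m - 1" for t l
  proof -
    have "rad (G t) l = rad (G 0) l" using cholfix[where t=t, OF that] Gfix[where t=t, OF that that] by (simp add: rad_def)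
    moreover have "q^2 > 0" using q0 by simp
    moreover have "l < m" using that by simp
    hence "rad (G 0) l \<ge> q^2" by (rule bnd)
    ultimately show ?thesis by linarith
  qed
  have pvt: "chol (G 0) l l \<noteq> 0" if "l < m - 1" for l
    using radpos[of l 0] that by (simp add: chol_diag)
  define t1 where "t1 = s + A (m - 1) m"
  have t10: "t1 \<ge> 0"
  proof -
    have "- M \<le> A (m - 1) m" using AMl mn by simp
    thus ?thesis using s1 M0 unfolding t1_def by linarith
  qed
  have ra: "rad (G t1) (m - 1) \<le> 0"
  proof -
    have "G t1 (m - 1) (m - 1) = 0" using mn by (simp add: G_def D_def x_def t1_def \<kappa>_def)
    thus ?thesis by (simp add: rad_def sum_nonneg)
  qed
  have rb: "0 \<le> rad (G 0) (m - 1)"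
  proof -
    have "q^2 \<ge> 0" by simp
    thus ?thesis using bnd[of "m - 1"] mn(5) by linarith
  qed
  obtain t where t: "0 \<le> t" "t \<le> t1" "rad (G t) (m - 1) = 0"
    using IVT2[of "\<lambda>t. rad (G t) (m - 1)" t1 0 0] ra rb t10
      chol_cont[where k="m - 1" and G=G, OF Gfix Gcont pvt] by auto
  define L where "L = chol (G t)"
  have gram: "(\<Sum>r<m - 1. L i r * L j r) = G t i j" if "i \<le> m - 1" "j \<le> m - 1" for i j
  proof -
    have g: "(\<Sum>r<Suc (m - 1). L i r * L j r) = G t i j"
      unfolding L_def
      by (rule chol_gram[OF Gsym radpos]) (use t that in auto)
    have z: "L j (m - 1) = 0"
    proof (cases "j = m - 1")
      case True then show ?thesis using t by (simp add: L_def chol_diag)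
    next
      case False then show ?thesis using that by (simp add: L_def chol_above)
    qed
    show ?thesis using g z by simp
  qed
  define d where "d = m - 1"
  define v where "v = (\<lambda>i r. if i < m then L i r else 0)"
  have IP: "(\<Sum>r<d. v i r * v j r) = (if i < m \<and> j < m then G t i j else 0)" for i j
    using gram[of i j] by (auto simp: v_def d_def)
  have sqd: "(\<Sum>r<d. (v i r - v j r)^2) = (D t i j)^2" if "i \<le> m" "j \<le> m" for i j
  proof -
    have "(\<Sum>r<d. (v i r - v j r)^2) = (\<Sum>r<d. v i r * v i r) + (\<Sum>r<d. v j r * v j r) - 2 * (\<Sum>r<d. v i r * v j r)"
      by (simp add: power2_eq_square algebra_simps sum.distrib sum_subtractf sum_distrib_left)
    also have "\<dots> = (D t i j)^2"
      unfolding IP using that by (cases "i = m"; cases "j = m") (auto simp: G_def D_def Asym[of m] add_ac field_simps)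
    finally show ?thesis .
  qed
  have tb: "t \<le> s + M"
  proof -
    have "A (m - 1) m \<le> M" using AMl mn by simp
    thus ?thesis using t unfolding t1_def by linarith
  qed
  have Dnn0: "D t i j \<ge> 0" if "i \<le> m" "j \<le> m" "i \<le> j" for i j
  proof (cases "i = j")
    case True then show ?thesis by (simp add: D_def)
  next
    case ne: False
    have a: "- M \<le> A i j" using AMl that mn by simp
    show ?thesis
    proof (cases "j = m")
      case jm: True
      show ?thesis
      proof (cases "i = m - 1")
        case True
        then have "D t i j = A (m - 1) m + s - t" using jm ne mn by (simp add: D_def x_def \<kappa>_def)
        then show ?thesis using t by (simp add: t1_def)
      next
        case False
        then have "D t i j = A i j + s" using jm ne mn by (simp add: D_def x_def \<kappa>_def)
        then show ?thesis using a s1 M0 by linarith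
      qed
    next
      case jm: False
      have "i \<noteq> m" using jm that ne by simp
      have xi: "x t i \<ge> - t" "x t j \<ge> - t" "x t i + x t j \<ge> - t"
        using \<open>i \<noteq> m\<close> jm ne t by (auto simp: x_def)
      have "D t i j = A i j + sqrt 2 * s + x t i + x t j" using ne by (simp add: D_def \<kappa>_def)
      moreover have "sqrt 2 * s \<ge> 1.4 * s" using s2b s1 by (simp add: mult_right_mono)
      ultimately show ?thesis using xi a tb s1 M0 by linarith
    qed
  qed
  have Dnn: "D t i j \<ge> 0" if "i \<le> m" "j \<le> m" for i j
    using Dnn0[of i j] Dnn0[of j i] that Dsym[of t i j] by (cases "i \<le> j") auto
  have DM: "dist_matrix d v i j = D t i j" if "i < n" "j < n" for i j
  proof -
    have "i \<le> m" "j \<le> m" using that mn by auto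
    thus ?thesis using sqd Dnn by (simp add: dist_matrix_def edist_def)
  qed
  have "ucenter n (dist_matrix d v) = ucenter n (D t)" by (rule ucenter_cong) (use DM in auto)
  also have "\<dots> = ucenter n A" unfolding D_def
    by (rule ucenter_kernel) (use mn Adiag in auto)
  finally have "ucenter n (dist_matrix d v) = H" using HA by simp
  moreover have "1 \<le> d" "d \<le> n - 2" using mn by (auto simp: d_def)
  ultimately show ?thesis by blast
qed

end
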